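(* Let $X$ be a proper metric space with $\operatorname{trasind} X=\alpha$ for some ordinal number $\alpha$. Then for each ordinal $\beta<\alpha$ there exists a subset $X_\beta\subset X$ (with the restricted metric) such that $\operatorname{trasind} X_\beta=\beta$.
   Context: A metric space is proper if every closed ball is compact; each such space $X$ has a fixed base point $x_0$, with metric $d$. A map $\phi:X\to[0,1]$ is slowly oscillating if for every $r>0$ and $\varepsilon>0$ there is $D>0$ with $\operatorname{diam}\phi(B_r(x))<\varepsilon$ whenever $d(x,x_0)\ge D$, where $B_r(x)$ is the open $r$-ball. The Higson compactification $cX$ is the closure of the image of $X$ under $x\mapsto(\phi(x))_{\phi\in C_h(X)}\in[0,1]^{C_h(X)}$, where $C_h(X)$ is the set of continuous slowly oscillating maps $X\to[0,1]$; the Higson corona is $\nu X=cX\setminus X$. For $C\subset X$, $C'=\operatorname{cl}_{cX}C\cap\nu X$. A partition between disjoint closed sets $P,Q$ of a space $Z$ is a set $S\subset Z$ such that $Z\setminus S=U_1\cup U_2$ with $U_1,U_2$ disjoint open, $P\subset U_1$, $Q\subset U_2$. For $x\in\nu X$ and $A\subset X$ with $x\notin A'$, a set $C\subset X$ is an asymptotic separator for $x$ and $A$ if $C'$ is a partition between $\{x\}$ and $A'$ in $\nu X$. The transfinite dimension $\operatorname{trasind}$: $\operatorname{trasind} X=-1$ iff $X$ is bounded; for an ordinal $\alpha$, $\operatorname{trasind} X\le\alpha$ iff for every $x\in\nu X$ and $A\subset X$ with $x\notin A'$ there is an asymptotic separator $C$ for $x$ and $A$ with $\operatorname{trasind} C\le\beta$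 for some $\beta<\alpha$; $\operatorname{trasind} X=\alpha$ iff $\operatorname{trasind} X\le\alpha$ but not $\operatorname{trasind}X\le\beta$ for any $\beta<\alpha$; $\operatorname{trasind} X=\infty$ if $\operatorname{trasind} X\le\alpha$ holds for no ordinal $\alpha$. *)

theory Defs
  imports "HOL-Analysis.Analysis"
begin

text \<open>A (sub)space is given by a carrier set S of a metric space type, with the
restricted metric.  x0 is the base point (the notions below do not depend on it).\<close>

definition slowly_osc :: "'a::metric_space \<Rightarrow> 'a set \<Rightarrow> ('a \<Rightarrow> real) \<Rightarrow> bool" where
  "slowly_osc x0 S \<phi> \<longleftrightarrow>
     (\<forall>r>0. \<forall>\<epsilon>>0. \<exists>D>0. \<forall>x\<in>S. dist x x0 \<ge> D \<longrightarrow> diameter (\<phi> ` (ball x r \<inter> S)) < \<epsilon>)"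

definition higson_fns :: "'a::metric_space \<Rightarrow> 'a set \<Rightarrow> ('a \<Rightarrow> real) set" where
  "higson_fns x0 S = {\<phi>. continuous_on S \<phi> \<and> \<phi> ` S \<subseteq> {0..1} \<and> slowly_osc x0 S \<phi>
                          \<and> (\<forall>x. x \<notin> S \<longrightarrow> \<phi> x = 0)}"

definition higson_emb :: "'a::metric_space \<Rightarrow> 'a set \<Rightarrow> 'a \<Rightarrow> (('a \<Rightarrow> real) \<Rightarrow> real)" where
  "higson_emb x0 S x = restrict (\<lambda>\<phi>. \<phi> x) (higson_fns x0 S)"

definition higson_top :: "'a::metric_space \<Rightarrow> 'a set \<Rightarrow> (('a \<Rightarrow> real) \<Rightarrow> real) topology" where
  "higson_top x0 S = product_topology (\<lambda>_. top_of_set {0..1::real}) (higson_fns x0 S)"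

definition higson_compactification :: "'a::metric_space \<Rightarrow> 'a set \<Rightarrow> (('a \<Rightarrow> real) \<Rightarrow> real) set" where
  "higson_compactification x0 S = higson_top x0 S closure_of (higson_emb x0 S ` S)"

definition higson_corona :: "'a::metric_space \<Rightarrow> 'a set \<Rightarrow> (('a \<Rightarrow> real) \<Rightarrow> real) set" where
  "higson_corona x0 S = higson_compactification x0 S - higson_emb x0 S ` S"

definition corona_trace :: "'a::metric_space \<Rightarrow> 'a set \<Rightarrow> 'a set \<Rightarrow> (('a \<Rightarrow> real) \<Rightarrow> real) set" where
  "corona_trace x0 S C = (higson_top x0 S closure_of (higson_emb x0 S ` C)) \<inter> higson_corona x0 S"

definition is_partition_between :: "'b topology \<Rightarrow> 'b set \<Rightarrow> 'b set \<Rightarrow> 'b set \<Rightarrow> bool" where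
  "is_partition_between T L P Q \<longleftrightarrow>
     (\<exists>U1 U2. openin T U1 \<and> openin T U2 \<and> U1 \<inter> U2 = {} \<and>
              topspace T - L = U1 \<union> U2 \<and> P \<subseteq> U1 \<and> Q \<subseteq> U2)"

definition asymptotic_separator ::
  "'a::metric_space \<Rightarrow> 'a set \<Rightarrow> 'a set \<Rightarrow> (('a \<Rightarrow> real) \<Rightarrow> real) \<Rightarrow> 'a set \<Rightarrow> bool" where
  "asymptotic_separator x0 S C x A \<longleftrightarrow>
     is_partition_between (subtopology (higson_top x0 S) (higson_corona x0 S))
        (corona_trace x0 S C) {x} (corona_trace x0 S A)"

text \<open>Ordinals are represented by a well-order r: None stands for -1, Some a for the
ordinal type of the strict initial segment of r below a.  trasind_le r x0 S \<beta> means
trasind S \<le> \<beta>.\<close>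
inductive trasind_le :: "('o \<times> 'o) set \<Rightarrow> 'a::metric_space \<Rightarrow> 'a set \<Rightarrow> 'o option \<Rightarrow> bool"
  for r x0 where
  bounded: "bounded S \<Longrightarrow> trasind_le r x0 S None"
| step: "a \<in> Field r \<Longrightarrow>
     (\<forall>x\<in>higson_corona x0 S. \<forall>A. A \<subseteq> S \<longrightarrow> x \<notin> corona_trace x0 S A \<longrightarrow>
        (\<exists>C. C \<subseteq> S \<and> asymptotic_separator x0 S C x A \<and>
             (trasind_le r x0 C None \<or> (\<exists>b. (b, a) \<in> r \<and> b \<noteq> a \<and> trasind_le r x0 C (Some b)))))
     \<Longrightarrow> trasind_le r x0 S (Some a)"

definition trasind_eq :: "('o \<times> 'o) set \<Rightarrow> 'a::metric_space \<Rightarrow> 'a set \<Rightarrow> 'o \<Rightarrow> bool" where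
  "trasind_eq r x0 S a \<longleftrightarrow> trasind_le r x0 S (Some a) \<and> \<not> trasind_le r x0 S None \<and>
     (\<forall>b. (b, a) \<in> r \<and> b \<noteq> a \<longrightarrow> \<not> trasind_le r x0 S (Some b))"

end

theory Submission
  imports Defs
begin

lemma tl_None: "trasind_le r x0 S None \<longleftrightarrow> bounded S"
  by (auto elim: trasind_le.cases intro: trasind_le.bounded)

lemma tl_Field: "trasind_le r x0 S (Some c) \<Longrightarrow> c \<in> Field r"
  by (auto elim: trasind_le.cases)

lemma gen:
  assumes wo: "Well_order r"
  shows "\<forall>S. trasind_eq r x0 S a \<longrightarrow> (\<forall>b. (b, a) \<in> r \<and> b \<noteq> a \<longrightarrow> (\<exists>Y. trasind_eq r x0 Y b))"
proof -
  have wf: "wf (r - Id)" using wo by (simp add: well_order_on_def)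
  have tot: "total_on (Field r) r" and tr: "trans r" and as: "antisym r" and rf: "refl_on (Field r) r"
    using wo by (auto simp: well_order_on_def linear_order_on_def partial_order_on_def preorder_on_def)
  show ?thesis
  proof (induction a rule: wf_induct[OF wf])
    case (1 a)
    show ?case
    proof (intro allI impI, elim conjE)
      fix S b assume eq: "trasind_eq r x0 S a" and ba: "(b, a) \<in> r" "b \<noteq> a"
      have bF: "b \<in> Field r" using ba by (auto simp: Field_def)
      have leA: "trasind_le r x0 S (Some a)" and nb: "\<not> trasind_le r x0 S (Some b)"
        using eq ba unfolding trasind_eq_def by auto
      from nb bF obtain x A where x: "x \<in> higson_corona x0 S" and A: "A \<subseteq> S"
        "x \<notin> corona_trace x0 S A" and noC: "\<And>C. C \<subseteq> S \<Longrightarrow> asymptotic_separator x0 S C x A \<Longrightarrow>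
          \<not> trasind_le r x0 C None \<and> (\<forall>b'. (b', b) \<in> r \<and> b' \<noteq> b \<longrightarrow> \<not> trasind_le r x0 C (Some b'))"
      proof -
        have "\<not> (\<forall>x\<in>higson_corona x0 S. \<forall>A. A \<subseteq> S \<longrightarrow> x \<notin> corona_trace x0 S A \<longrightarrow>
          (\<exists>C. C \<subseteq> S \<and> asymptotic_separator x0 S C x A \<and>
             (trasind_le r x0 C None \<or> (\<exists>b'. (b', b) \<in> r \<and> b' \<noteq> b \<and> trasind_le r x0 C (Some b')))))"
        proof (rule notI)
          assume H: "\<forall>x\<in>higson_corona x0 S. \<forall>A. A \<subseteq> S \<longrightarrow> x \<notin> corona_trace x0 S A \<longrightarrow>
          (\<exists>C. C \<subseteq> S \<and> asymptotic_separator x0 S C x A \<and>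
             (trasind_le r x0 C None \<or> (\<exists>b'. (b', b) \<in> r \<and> b' \<noteq> b \<and> trasind_le r x0 C (Some b'))))"
          show False using nb trasind_le.step[OF bF H] by simp
        qed
        then obtain x where x: "x \<in> higson_corona x0 S" and
          hx: "\<not> (\<forall>A. A \<subseteq> S \<longrightarrow> x \<notin> corona_trace x0 S A \<longrightarrow>
          (\<exists>C. C \<subseteq> S \<and> asymptotic_separator x0 S C x A \<and>
             (trasind_le r x0 C None \<or> (\<exists>b'. (b', b) \<in> r \<and> b' \<noteq> b \<and> trasind_le r x0 C (Some b')))))"
          by (meson Ball_def)
        then obtain A where A1: "A \<subseteq> S" and A2: "x \<notin> corona_trace x0 S A" and
          hA: "\<not> (\<exists>C. C \<subseteq> S \<and> asymptotic_separator x0 S C x A \<and>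
             (trasind_le r x0 C None \<or> (\<exists>b'. (b', b) \<in> r \<and> b' \<noteq> b \<and> trasind_le r x0 C (Some b'))))"
          by meson
        show ?thesis
        proof (rule that[OF x A1 A2])
          fix C assume "C \<subseteq> S" "asymptotic_separator x0 S C x A"
          then show "\<not> trasind_le r x0 C None \<and> (\<forall>b'. (b', b) \<in> r \<and> b' \<noteq> b \<longrightarrow> \<not> trasind_le r x0 C (Some b'))"
            using hA by meson
        qed
      qed
      from leA have "\<forall>x\<in>higson_corona x0 S. \<forall>A. A \<subseteq> S \<longrightarrow> x \<notin> corona_trace x0 S A \<longrightarrow>
        (\<exists>C. C \<subseteq> S \<and> asymptotic_separator x0 S C x A \<and>
             (trasind_le r x0 C None \<or> (\<exists>b. (b, a) \<in> r \<and> b \<noteq> a \<and> trasind_le r x0 C (Some b))))"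
      proof (cases rule: trasind_le.cases)
        case step
        then show ?thesis by simp
      qed
      with x A obtain C where C: "C \<subseteq> S" "asymptotic_separator x0 S C x A"
        "trasind_le r x0 C None \<or> (\<exists>b. (b, a) \<in> r \<and> b \<noteq> a \<and> trasind_le r x0 C (Some b))"
        by blast
      from noC[OF C(1,2)] C(3) obtain c where c: "(c, a) \<in> r" "c \<noteq> a" "trasind_le r x0 C (Some c)"
        and CnB: "\<not> trasind_le r x0 C None"
        and Cb: "\<forall>b'. (b', b) \<in> r \<and> b' \<noteq> b \<longrightarrow> \<not> trasind_le r x0 C (Some b')"
        by blast
      obtain c' where c': "c' \<in> {d. trasind_le r x0 C (Some d)}"
        and min: "\<And>y. (y, c') \<in> r - Id \<Longrightarrow> y \<notin> {d. trasind_le r x0 C (Some d)}"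
        using wfE_min[OF wf, of c "{d. trasind_le r x0 C (Some d)}"] c(3) by blast
      have c'F: "c' \<in> Field r" using tl_Field[of r x0 C c'] c' by simp
      have cF: "c \<in> Field r" using tl_Field[of r x0 C c] c(3) by simp
      have bc': "(b, c') \<in> r"
      proof (cases "c' = b")
        case True then show ?thesis using bF rf by (simp add: refl_onD)
      next
        case False
        then have "(c', b) \<notin> r" using Cb c' by auto
        then show ?thesis using tot c'F bF False by (auto simp: total_on_def)
      qed
      have c'c: "(c', c) \<in> r"
      proof (cases "c' = c")
        case True then show ?thesis using cF rf by (simp add: refl_onD)
      next
        case False
        then have "(c, c') \<notin> r" using min c(3) by auto
        then show ?thesis using tot c'F cF False by (auto simp: total_on_def)
      qed
      have c'a: "(c', a) \<in> r" using c'c c(1) tr by (meson transD)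
      have c'na: "c' \<noteq> a" using c'c c as by (metis antisymD)
      have eqC: "trasind_eq r x0 C c'"
        unfolding trasind_eq_def using c' CnB min by auto
      show "\<exists>Y. trasind_eq r x0 Y b"
      proof (cases "c' = b")
        case True then show ?thesis using eqC by blast
      next
        case False
        have "(c', a) \<in> r - Id" using c'a c'na by auto
        with 1 eqC bc' False show ?thesis by blast
      qed
    qed
  qed
qed

theorem lemma1:
  fixes x0 :: "'a::metric_space" and r :: "('o \<times> 'o) set" and a :: 'o
  assumes proper: "\<forall>(x::'a) e. compact (cball x e)"
    and wo: "Well_order r" and a: "a \<in> Field r"
    and dim: "trasind_eq r x0 (UNIV :: 'a set) a"
  shows "\<forall>b. (b, a) \<in> r \<and> b \<noteq> a \<longrightarrow> (\<exists>Y :: 'a set. trasind_eq r x0 Y b)"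
  using gen[OF wo] dim by blast

end
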